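(* Let $q\in\,]0,1[$, $\omega\ge0$, let $I$ be an interval containing $\omega_0:=\omega/(1-q)$, $\alpha,\beta\in\mathbb{R}$, and suppose $a,b\in I$ with $a<b$ and $a,b\in[c]_{q,\omega}$ for some $c\in I$. Let $L:I\times\mathbb{R}\times\mathbb{R}\to\mathbb{R}$ satisfy: (H1) for every $t\in I$, $(u,v)\mapsto L(t,u,v)$ is $C^1(\mathbb{R}^2,\mathbb{R})$; (H2) for every admissible $y$, $t\mapsto L(t,y(\sigma(t)),\tilde D_{q,\omega}[y](t))$ is continuous at $\omega_0$; (H3) for every admissible $y$, $t\mapsto\partial_2L(t,y(\sigma(t)),\tilde D_{q,\omega}[y](t))$ and $t\mapsto\partial_3L(t,y(\sigma(t)),\tilde D_{q,\omega}[y](t))$ belong to $\mathcal{Y}^1([a,b]_{q,\omega},\mathbb{R})$. Assume $L$ is jointly convex (resp. jointly concave) in $(u,v)$. If an admissible function $y_*$ satisfies, for all $t\in[a,b]_{q,\omega}$, $$\partial_2L\bigl(t,y_*(\sigma(t)),\tilde D_{q,\omega}[y_*](t)\bigr)=\tilde D_{q,\omega}\Bigl[\tau\mapsto\partial_3L\bigl(\sigma(\tau),y_*(\sigma^2(\tau)),\tilde D_{q,\omega}[y_*](\sigma(\tau))\bigr)\Bigr](t),$$ then $y_*$ is a global minimizer (resp. maximizer) of problem (P), i.e. $\mathcal{L}(y_* )\le\mathcal{L}(y)$ (resp. $\ge$) for every admissible $y$.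
   Context: $\sigma(t):=qt+\omega$, $\sigma^{-1}(t):=q^{-1}(t-\omega)$, $\sigma^k$ the $k$-fold composition. Hahn symmetric derivative: for $t\neq\omega_0$, $\tilde D_{q,\omega}[f](t):=\frac{f(\sigma(t))-f(\sigma^{-1}(t))}{\sigma(t)-\sigma^{-1}(t)}$; $\tilde D_{q,\omega}[f](\omega_0):=f'(\omega_0)$ (classical). Hahn symmetric integral: $\int_{\omega_0}^xF\,\tilde d_{q,\omega}t:=(\sigma^{-1}(x)-\sigma(x))\sum_{n\ge0}q^{2n+1}F(\sigma^{2n+1}(x))$, $\int_a^bF\,\tilde d_{q,\omega}t:=\int_{\omega_0}^bF\,\tilde d_{q,\omega}t-\int_{\omega_0}^aF\,\tilde d_{q,\omega}t$. $[s]_{q,\omega}:=\{\sigma^{2n+1}(s):n\in\mathbb{N}_0\}\cup\{\omega_0\}$, $[a,b]_{q,\omega}:=[a]_{q,\omega}\cup[b]_{q,\omega}$. $\mathcal{Y}^1([a,b]_{q,\omega},\mathbb{R})$: functions $y:I\to\mathbb{R}$ with $y$ and $\tilde D_{q,\omega}[y]$ bounded on $[a,b]_{q,\omega}$ and continuous at $\omega_0$. Problem (P): extremize $\mathcal{L}(y):=\int_a^bL(t,y(\sigma(t)),\tilde D_{q,\omega}[y](t))\,\tilde d_{q,\omega}t$ over admissible $y$, i.e. $y\in\mathcal{Y}^1([a,b]_{q,\omega},\mathbb{R})$ with $y(a)=\alpha$, $y(b)=\beta$. $L$ is jointly convex (resp. concave) in $(u,v)$ if $\partial_2L,\partial_3L$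 exist, are continuous, and $L(t,u+u_1,v+v_1)-L(t,u,v)\ge$ (resp. $\le$) $\partial_2L(t,u,v)u_1+\partial_3L(t,u,v)v_1$ for all $(t,u,v),(t,u+u_1,v+v_1)\in I\times\mathbb{R}^2$. $\partial_jL$ is the partial derivative in the $j$-th argument. *)

theory Defs
  imports "HOL-Analysis.Analysis"
begin

definition hsig :: "real \<Rightarrow> real \<Rightarrow> real \<Rightarrow> real" where
  "hsig q \<omega> t = q * t + \<omega>"

definition hsig_inv :: "real \<Rightarrow> real \<Rightarrow> real \<Rightarrow> real" where
  "hsig_inv q \<omega> t = (t - \<omega>) / q"

definition hom0 :: "real \<Rightarrow> real \<Rightarrow> real" where
  "hom0 q \<omega> = \<omega> / (1 - q)"

definition hahnD :: "real \<Rightarrow> real \<Rightarrow> real set \<Rightarrow> (real \<Rightarrow> real) \<Rightarrow> real \<Rightarrow> real" where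
  "hahnD q \<omega> I f t =
     (if t = hom0 q \<omega> then (SOME d. (f has_real_derivative d) (at t within I))
      else (f (hsig q \<omega> t) - f (hsig_inv q \<omega> t)) / (hsig q \<omega> t - hsig_inv q \<omega> t))"

definition hahn_int0 :: "real \<Rightarrow> real \<Rightarrow> (real \<Rightarrow> real) \<Rightarrow> real \<Rightarrow> real" where
  "hahn_int0 q \<omega> F x =
     (hsig_inv q \<omega> x - hsig q \<omega> x) *
       (\<Sum>n. q ^ (2 * n + 1) * F ((hsig q \<omega> ^^ (2 * n + 1)) x))"

definition hahn_int :: "real \<Rightarrow> real \<Rightarrow> (real \<Rightarrow> real) \<Rightarrow> real \<Rightarrow> real \<Rightarrow> real" where
  "hahn_int q \<omega> F a b = hahn_int0 q \<omega> F b - hahn_int0 q \<omega> F a"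

definition qset :: "real \<Rightarrow> real \<Rightarrow> real \<Rightarrow> real set" where
  "qset q \<omega> s = {(hsig q \<omega> ^^ (2 * n + 1)) s | n. True} \<union> {hom0 q \<omega>}"

definition qint :: "real \<Rightarrow> real \<Rightarrow> real \<Rightarrow> real \<Rightarrow> real set" where
  "qint q \<omega> a b = qset q \<omega> a \<union> qset q \<omega> b"

text \<open>The class Y^1([a,b]_{q,omega}, R).  Differentiability at omega0 is
  required so that the Hahn derivative at omega0 is defined.\<close>
definition Y1 :: "real \<Rightarrow> real \<Rightarrow> real set \<Rightarrow> real \<Rightarrow> real \<Rightarrow> (real \<Rightarrow> real) \<Rightarrow> bool" where
  "Y1 q \<omega> I a b y \<longleftrightarrow>
     y differentiable (at (hom0 q \<omega>) within I) \<and>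
     bounded (y ` qint q \<omega> a b) \<and>
     bounded (hahnD q \<omega> I y ` qint q \<omega> a b) \<and>
     continuous (at (hom0 q \<omega>) within I) y \<and>
     continuous (at (hom0 q \<omega>) within I) (hahnD q \<omega> I y)"

definition admissible :: "real \<Rightarrow> real \<Rightarrow> real set \<Rightarrow> real \<Rightarrow> real \<Rightarrow> real \<Rightarrow> real
     \<Rightarrow> (real \<Rightarrow> real) \<Rightarrow> bool" where
  "admissible q \<omega> I a b \<alpha> \<beta> y \<longleftrightarrow> Y1 q \<omega> I a b y \<and> y a = \<alpha> \<and> y b = \<beta>"

definition functionalL :: "real \<Rightarrow> real \<Rightarrow> real set \<Rightarrow> (real \<Rightarrow> real \<Rightarrow> real \<Rightarrow> real)
     \<Rightarrow> real \<Rightarrow> real \<Rightarrow> (real \<Rightarrow> real) \<Rightarrow> real" where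
  "functionalL q \<omega> I L a b y =
     hahn_int q \<omega> (\<lambda>t. L t (y (hsig q \<omega> t)) (hahnD q \<omega> I y t)) a b"

definition part2 :: "(real \<Rightarrow> real \<Rightarrow> real \<Rightarrow> real) \<Rightarrow> real \<Rightarrow> real \<Rightarrow> real \<Rightarrow> real" where
  "part2 L t u v = deriv (\<lambda>u'. L t u' v) u"

definition part3 :: "(real \<Rightarrow> real \<Rightarrow> real \<Rightarrow> real) \<Rightarrow> real \<Rightarrow> real \<Rightarrow> real \<Rightarrow> real" where
  "part3 L t u v = deriv (\<lambda>v'. L t u v') v"

definition C1_R2 :: "(real \<times> real \<Rightarrow> real) \<Rightarrow> bool" where
  "C1_R2 f \<longleftrightarrow> (\<exists>D. (\<forall>p. (f has_derivative D p) (at p)) \<and>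
                     (\<forall>h. continuous_on UNIV (\<lambda>p. D p h)))"

definition jointly_convex :: "real set \<Rightarrow> (real \<Rightarrow> real \<Rightarrow> real \<Rightarrow> real) \<Rightarrow> bool" where
  "jointly_convex I L \<longleftrightarrow>
     (\<forall>t\<in>I. \<forall>u v u1 v1. L t (u + u1) (v + v1) - L t u v \<ge> part2 L t u v * u1 + part3 L t u v * v1)"

definition jointly_concave :: "real set \<Rightarrow> (real \<Rightarrow> real \<Rightarrow> real \<Rightarrow> real) \<Rightarrow> bool" where
  "jointly_concave I L \<longleftrightarrow>
     (\<forall>t\<in>I. \<forall>u v u1 v1. L t (u + u1) (v + v1) - L t u v \<le> part2 L t u v * u1 + part3 L t u v * v1)"

end

theory Submission
  imports Defs
begin

lemma hom0_fix: "q \<noteq> 1 \<Longrightarrow> q * hom0 q \<omega> + \<omega> = hom0 q \<omega>"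
  unfolding hom0_def by (simp add: field_simps)

lemma hsig_shift: "q \<noteq> 1 \<Longrightarrow> hsig q \<omega> (hom0 q \<omega> + r) = hom0 q \<omega> + q*r"
  using hom0_fix[of q \<omega>] unfolding hsig_def by (simp add: algebra_simps)

lemma hsig_inv_shift: "q \<noteq> 0 \<Longrightarrow> q \<noteq> 1 \<Longrightarrow> hsig_inv q \<omega> (hom0 q \<omega> + r) = hom0 q \<omega> + r/q"
proof -
  assume q: "q \<noteq> 0" "q \<noteq> 1"
  have e: "hom0 q \<omega> + r - \<omega> = q * hom0 q \<omega> + r" using hom0_fix[OF q(2), of \<omega>] by linarith
  show ?thesis unfolding hsig_inv_def e using q by (simp add: add_divide_distrib)
qed

lemma hsig_pow: "q \<noteq> 1 \<Longrightarrow> (hsig q \<omega> ^^ k) x = hom0 q \<omega> + q^k*(x - hom0 q \<omega>)"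
proof (induction k)
  case 0 then show ?case by simp
next
  case (Suc k)
  then show ?case using hsig_shift[of q \<omega> "q^k*(x - hom0 q \<omega>)"] by simp
qed

lemma int0_form:
  assumes "q \<noteq> 0" "q \<noteq> 1"
  shows "hahn_int0 q \<omega> F x = (1/q - q)*(x - hom0 q \<omega>) *
     (\<Sum>n. q^(2*n+1) * F (hom0 q \<omega> + q^(2*n+1)*(x - hom0 q \<omega>)))"
proof -
  have e: "hsig_inv q \<omega> x - hsig q \<omega> x = (1/q - q)*(x - hom0 q \<omega>)"
    using hsig_shift[OF assms(2), of \<omega> "x - hom0 q \<omega>"] hsig_inv_shift[OF assms, of \<omega> "x - hom0 q \<omega>"]
    by (simp add: field_simps)
  show ?thesis unfolding hahn_int0_def e hsig_pow[OF assms(2)] by simp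
qed
lemma in_I: "is_interval I \<Longrightarrow> w \<in> I \<Longrightarrow> x \<in> I \<Longrightarrow> 0 \<le> r \<Longrightarrow> r \<le> (1::real) \<Longrightarrow> w + r*(x-w) \<in> I"
proof -
  assume h: "is_interval I" "w \<in> I" "x \<in> I" "0 \<le> r" "r \<le> 1"
  have iv: "\<And>a b z. a \<in> I \<Longrightarrow> b \<in> I \<Longrightarrow> a \<le> z \<Longrightarrow> z \<le> b \<Longrightarrow> z \<in> I"
    using h(1) unfolding is_interval_1 by blast
  show "w + r*(x-w) \<in> I"
  proof (cases "w \<le> x")
    case True
    have "r*(x-w) \<le> 1*(x-w)" using h True by (intro mult_right_mono) auto
    moreover have "0 \<le> r*(x-w)" using h True by simp
    ultimately show ?thesis using iv[OF h(2) h(3)] by simp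
  next
    case False
    have "r*(w-x) \<le> 1*(w-x)" using h False by (intro mult_right_mono) auto
    moreover have "0 \<le> r*(w-x)" using h False by simp
    ultimately show ?thesis using iv[OF h(3) h(2)] by (simp add: algebra_simps)
  qed
qed

lemma summ_bseq:
  fixes q :: real
  assumes "0 < q" "q < 1" "Bseq F"
  shows "summable (\<lambda>n. q^(2*n+1) * F n)"
proof -
  obtain B where B: "B > 0" "\<forall>n. norm (F n) \<le> B" using BseqE[OF assms(3)] by blast
  have g: "summable (\<lambda>n. B*q*(q^2)^n)"
  proof (intro summable_mult summable_geometric)
    have "q^2 < 1" using assms by (simp add: power_less_one_iff)
    then show "norm (q^2) < 1" by simp
  qed
  show ?thesis
  proof (rule summable_comparison_test'[OF g])
    fix n
    have "norm (q^(2*n+1) * F n) = q^(2*n+1) * norm (F n)" using assms by (simp add: abs_mult)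
    also have "\<dots> \<le> q^(2*n+1) * B" using B assms by (intro mult_left_mono) auto
    also have "\<dots> = B*q*(q^2)^n" by (simp add: power_mult[symmetric] algebra_simps)
    finally show "norm (q^(2*n+1) * F n) \<le> B*q*(q^2)^n" .
  qed
qed


lemma tends1:
  fixes q :: real
  assumes "0 < q" "q < 1"
  shows "(\<lambda>n. w + q^(2*n+1)*d) \<longlonglongrightarrow> w" "(\<lambda>n. w + q^(2*n)*d) \<longlonglongrightarrow> w"
proof -
  have z: "(\<lambda>n. (q^2)^n) \<longlonglongrightarrow> 0" using assms by (intro LIMSEQ_power_zero) (simp add: power_less_one_iff abs_if)
  have "(\<lambda>n. w + (q*d)*(q^2)^n) \<longlonglongrightarrow> w + (q*d)*0" by (intro tendsto_intros z)
  moreover have "\<And>n. w + (q*d)*(q^2)^n = w + q^(2*n+1)*d" by (simp add: power_mult[symmetric] algebra_simps)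
  ultimately show "(\<lambda>n. w + q^(2*n+1)*d) \<longlonglongrightarrow> w" by simp
  have "(\<lambda>n. w + d*(q^2)^n) \<longlonglongrightarrow> w + d*0" by (intro tendsto_intros z)
  moreover have "\<And>n. w + d*(q^2)^n = w + q^(2*n)*d" by (simp add: power_mult[symmetric] algebra_simps)
  ultimately show "(\<lambda>n. w + q^(2*n)*d) \<longlonglongrightarrow> w" by simp
qed


lemma shift:
  fixes q :: real
  assumes "0 < q" "summable (\<lambda>n. q^(2*n+1)*G(w + q^(2*n+1)*d))"
  shows "(\<Sum>n. q^(2*n+1)*G(w + q^(2*n+1)*d)) - q^(2*j)*(\<Sum>n. q^(2*n+1)*G(w + q^(2*n+1)*(q^(2*j)*d)))
         = (\<Sum>n<j. q^(2*n+1)*G(w+q^(2*n+1)*d))"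
proof -
  let ?f = "\<lambda>n. q^(2*n+1)*G(w + q^(2*n+1)*d)"
  let ?g = "\<lambda>n. q^(2*n+1)*G(w + q^(2*n+1)*(q^(2*j)*d))"
  have fg: "\<And>n. ?f (n+j) = q^(2*j) * ?g n"
    by (simp add: power_add algebra_simps)
  have s1: "summable (\<lambda>n. ?f (n+j))" using assms(2) by (rule summable_ignore_initial_segment)
  have "summable (\<lambda>n. ?f (n+j) / q^(2*j))" using summable_divide[OF s1] .
  moreover have "(\<lambda>n. ?f (n+j) / q^(2*j)) = ?g" using assms(1) by (intro ext) (simp only: fg, simp)
  ultimately have sg: "summable ?g" by metis
  have "suminf ?f = (\<Sum>n. ?f (n+j)) + (\<Sum>n<j. ?f n)" by (rule suminf_split_initial_segment[OF assms(2)])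
  also have "(\<Sum>n. ?f (n+j)) = q^(2*j) * suminf ?g" unfolding fg using suminf_mult[OF sg] by simp
  finally show ?thesis by simp
qed




lemma K_pos: "0 < (q::real) \<Longrightarrow> q < 1 \<Longrightarrow> 0 < 1/q - q"
proof -
  assume q: "0 < q" "q < 1"
  have "q * q < 1 * 1" using q by (intro mult_strict_mono) auto
  moreover have "1/q - q = (1 - q*q)/q" using q by (simp add: field_simps)
  ultimately show ?thesis using q by simp
qed

lemma qset_cases:
  assumes "q \<noteq> 1" "z \<in> qset q \<omega> c"
  shows "z = hom0 q \<omega> \<or> (\<exists>m. z - hom0 q \<omega> = q^(2*m+1)*(c - hom0 q \<omega>))"
  using assms unfolding qset_def hsig_pow[OF assms(1)] by auto

lemma orbit_rel:
  fixes q :: real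
  assumes q: "0 < q" "q < 1" and lt: "q^(2*m+1)*e < q^(2*k+1)*e"
  shows "(0 < e \<and> (\<exists>j. q^(2*m+1)*e = q^(2*j)*(q^(2*k+1)*e))) \<or>
         (e < 0 \<and> (\<exists>j. q^(2*k+1)*e = q^(2*j)*(q^(2*m+1)*e)))"
proof (cases "0 < e")
  case True
  hence "q^(2*m+1) < q^(2*k+1)" using lt by (simp only: mult_less_cancel_right_pos)
  hence "2*k+1 < 2*m+1" using power_strict_decreasing_iff[OF q] by blast
  hence "2*m+1 = 2*(m-k) + (2*k+1)" by simp
  hence "q^(2*m+1)*e = q^(2*(m-k))*(q^(2*k+1)*e)" by (metis power_add mult.assoc)
  then show ?thesis using True by blast
next
  case False
  hence e: "e < 0" using lt by (cases "e = 0") auto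
  hence "q^(2*k+1) < q^(2*m+1)" using lt by (simp only: mult_less_cancel_right_neg)
  hence "2*m+1 < 2*k+1" using power_strict_decreasing_iff[OF q] by blast
  hence "2*k+1 = 2*(k-m) + (2*m+1)" by simp
  hence "q^(2*k+1)*e = q^(2*(k-m))*(q^(2*m+1)*e)" by (metis power_add mult.assoc)
  then show ?thesis using e by blast
qed

lemma pos_int:
  fixes q \<omega> a b c :: real and G :: "real \<Rightarrow> real"
  assumes q: "0 < q" "q < 1" and ab: "a < b" "a \<in> qset q \<omega> c" "b \<in> qset q \<omega> c"
    and sa: "summable (\<lambda>n. q^(2*n+1) * G (hom0 q \<omega> + q^(2*n+1)*(a - hom0 q \<omega>)))"
    and sb: "summable (\<lambda>n. q^(2*n+1) * G (hom0 q \<omega> + q^(2*n+1)*(b - hom0 q \<omega>)))"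
    and ga: "\<forall>n. 0 \<le> G (hom0 q \<omega> + q^(2*n+1)*(a - hom0 q \<omega>))"
    and gb: "\<forall>n. 0 \<le> G (hom0 q \<omega> + q^(2*n+1)*(b - hom0 q \<omega>))"
  shows "0 \<le> hahn_int q \<omega> G a b"
proof -
  define w where "w = hom0 q \<omega>"
  define K where "K = 1/q - q"
  define Sa where "Sa = (\<Sum>n. q^(2*n+1) * G (w + q^(2*n+1)*(a - w)))"
  define Sb where "Sb = (\<Sum>n. q^(2*n+1) * G (w + q^(2*n+1)*(b - w)))"
  have K: "0 < K" unfolding K_def using K_pos q by blast
  have Sa0: "0 \<le> Sa" unfolding Sa_def w_def using sa ga q by (intro suminf_nonneg) auto
  have Sb0: "0 \<le> Sb" unfolding Sb_def w_def using sb gb q by (intro suminf_nonneg) auto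
  have qn: "q \<noteq> 0" "q \<noteq> 1" using q by auto
  have int: "hahn_int q \<omega> G a b = K*(b-w)*Sb - K*(a-w)*Sa"
    unfolding hahn_int_def int0_form[OF qn] K_def Sa_def Sb_def w_def ..
  have ca: "a = w \<or> (\<exists>m. a - w = q^(2*m+1)*(c - w))" using qset_cases[OF qn(2) ab(2)] w_def by simp
  have cb: "b = w \<or> (\<exists>m. b - w = q^(2*m+1)*(c - w))" using qset_cases[OF qn(2) ab(3)] w_def by simp
  show ?thesis
  proof (cases "a = w")
    case True
    then show ?thesis unfolding int using K Sb0 ab(1) by simp
  next
    case aw: False
    show ?thesis
    proof (cases "b = w")
      case True
      have "0 \<le> K*(w-a)*Sa" using K Sa0 ab(1) True by simp
      then show ?thesis unfolding int using True by (simp add: algebra_simps)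
    next
      case bw: False
      obtain m where m: "a - w = q^(2*m+1)*(c - w)" using ca aw by blast
      obtain k where k: "b - w = q^(2*k+1)*(c - w)" using cb bw by blast
      have "q^(2*m+1)*(c - w) < q^(2*k+1)*(c - w)" using m k ab(1) by linarith
      from orbit_rel[OF q this] show ?thesis
      proof
        assume "0 < c - w \<and> (\<exists>j. q^(2*m+1)*(c - w) = q^(2*j)*(q^(2*k+1)*(c - w)))"
        then obtain j where pos: "0 < c - w" and j: "a - w = q^(2*j)*(b - w)" using m k by auto
        have bpos: "0 < b - w" using k pos q by simp
        have sh: "Sb - q^(2*j)*Sa = (\<Sum>n<j. q^(2*n+1)*G(w+q^(2*n+1)*(b-w)))"
          unfolding Sa_def Sb_def j using shift[of q G w "b-w" j] q sb w_def by simp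
        have "0 \<le> (\<Sum>n<j. q^(2*n+1)*G(w+q^(2*n+1)*(b-w)))"
          using gb q w_def by (intro sum_nonneg) simp
        hence "0 \<le> K*(b-w)*(Sb - q^(2*j)*Sa)" using sh K bpos by simp
        moreover have "K*(b-w)*Sb - K*(a-w)*Sa = K*(b-w)*(Sb - q^(2*j)*Sa)" unfolding j by (simp add: algebra_simps)
        ultimately show ?thesis unfolding int by simp
      next
        assume "c - w < 0 \<and> (\<exists>j. q^(2*k+1)*(c - w) = q^(2*j)*(q^(2*m+1)*(c - w)))"
        then obtain j where neg: "c - w < 0" and j: "b - w = q^(2*j)*(a - w)" using m k by auto
        have aneg: "a - w < 0" using m neg q by (simp add: mult_pos_neg)
        have sh: "Sa - q^(2*j)*Sb = (\<Sum>n<j. q^(2*n+1)*G(w+q^(2*n+1)*(a-w)))"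
          unfolding Sa_def Sb_def j using shift[of q G w "a-w" j] q sa w_def by simp
        have "0 \<le> (\<Sum>n<j. q^(2*n+1)*G(w+q^(2*n+1)*(a-w)))"
          using ga q w_def by (intro sum_nonneg) simp
        hence "0 \<le> K*(w-a)*(Sa - q^(2*j)*Sb)" using sh K aneg by simp
        moreover have "K*(b-w)*Sb - K*(a-w)*Sa = K*(w-a)*(Sa - q^(2*j)*Sb)" unfolding j by (simp add: algebra_simps)
        ultimately show ?thesis unfolding int by simp
      qed
    qed
  qed
qed

definition linp :: "real \<Rightarrow> real \<Rightarrow> real set \<Rightarrow> (real\<Rightarrow>real\<Rightarrow>real\<Rightarrow>real) \<Rightarrow> (real\<Rightarrow>real) \<Rightarrow> (real\<Rightarrow>real) \<Rightarrow> real \<Rightarrow> real" where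
"linp q \<omega> I L ys y t = part2 L t (ys (hsig q \<omega> t)) (hahnD q \<omega> I ys t) * (y (hsig q \<omega> t) - ys (hsig q \<omega> t))
   + part3 L t (ys (hsig q \<omega> t)) (hahnD q \<omega> I ys t) * (hahnD q \<omega> I y t - hahnD q \<omega> I ys t)"

lemma alg: "(W::real) \<noteq> 0 \<Longrightarrow> K*d*qq = -W \<Longrightarrow>
  (K*d)*(qq*((f1 - f0)/W * (YY1 - ZZ1) + f0*((YY1 - YY0)/W - (ZZ1 - ZZ0)/W))) = f0*(YY0 - ZZ0) - f1*(YY1 - ZZ1)"
proof -
  assume W: "W \<noteq> 0" and e: "K*d*qq = -W"
  have "(K*d)*(qq*((f1 - f0)/W * (YY1 - ZZ1) + f0*((YY1 - YY0)/W - (ZZ1 - ZZ0)/W)))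
      = (K*d*qq)*((f1 - f0)/W * (YY1 - ZZ1) + f0*((YY1 - YY0)/W - (ZZ1 - ZZ0)/W))" by (simp only: mult.assoc)
  also have "\<dots> = -W*((f1 - f0)/W * (YY1 - ZZ1) + f0*((YY1 - YY0)/W - (ZZ1 - ZZ0)/W))" by (simp only: e)
  also have "\<dots> = f0*(YY0 - ZZ0) - f1*(YY1 - ZZ1)" using W by (simp add: field_simps)
  finally show ?thesis .
qed

lemma lin_alg: "(X::real) = (B - C) - D \<Longrightarrow> k*B - k*C = k*X + k*D"
proof -
  assume "X = (B - C) - D"
  then show ?thesis by (simp add: right_diff_distrib)
qed

lemma div_alg: "(k::real) \<noteq> 0 \<Longrightarrow> S = A / k \<Longrightarrow> k * S = A"
  by simp

lemma per_x:
  fixes q \<omega> x :: real and I :: "real set" and L :: "real\<Rightarrow>real\<Rightarrow>real\<Rightarrow>real" and ys y :: "real \<Rightarrow> real"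
  assumes q: "0 < q" "q < 1" and I: "is_interval I" "hom0 q \<omega> \<in> I" and x: "x \<in> I" "y x = ys x"
    and cy: "continuous (at (hom0 q \<omega>) within I) y"
    and cys: "continuous (at (hom0 q \<omega>) within I) ys"
    and cLy: "continuous (at (hom0 q \<omega>) within I) (\<lambda>t. L t (y (hsig q \<omega> t)) (hahnD q \<omega> I y t))"
    and cLys: "continuous (at (hom0 q \<omega>) within I) (\<lambda>t. L t (ys (hsig q \<omega> t)) (hahnD q \<omega> I ys t))"
    and cf: "continuous (at (hom0 q \<omega>) within I) (\<lambda>t. part3 L t (ys (hsig q \<omega> t)) (hahnD q \<omega> I ys t))"
    and EL: "\<forall>n. part2 L (hom0 q \<omega> + q^(2*n+1)*(x - hom0 q \<omega>))
                   (ys (hsig q \<omega> (hom0 q \<omega> + q^(2*n+1)*(x - hom0 q \<omega>))))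
                   (hahnD q \<omega> I ys (hom0 q \<omega> + q^(2*n+1)*(x - hom0 q \<omega>))) =
             hahnD q \<omega> I (\<lambda>\<tau>. part3 L (hsig q \<omega> \<tau>) (ys (hsig q \<omega> (hsig q \<omega> \<tau>)))
                                    (hahnD q \<omega> I ys (hsig q \<omega> \<tau>))) (hom0 q \<omega> + q^(2*n+1)*(x - hom0 q \<omega>))"
  shows "hahn_int0 q \<omega> (\<lambda>t. L t (y (hsig q \<omega> t)) (hahnD q \<omega> I y t)) x
           - hahn_int0 q \<omega> (\<lambda>t. L t (ys (hsig q \<omega> t)) (hahnD q \<omega> I ys t)) x
         = hahn_int0 q \<omega> (\<lambda>t. L t (y (hsig q \<omega> t)) (hahnD q \<omega> I y t)
                  - L t (ys (hsig q \<omega> t)) (hahnD q \<omega> I ys t) - linp q \<omega> I L ys y t) x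
           - part3 L (hom0 q \<omega>) (ys (hsig q \<omega> (hom0 q \<omega>))) (hahnD q \<omega> I ys (hom0 q \<omega>))
              * (y (hom0 q \<omega>) - ys (hom0 q \<omega>))
       \<and> summable (\<lambda>n. q^(2*n+1) * (L (hom0 q \<omega> + q^(2*n+1)*(x - hom0 q \<omega>)) (y (hsig q \<omega> (hom0 q \<omega> + q^(2*n+1)*(x - hom0 q \<omega>)))) (hahnD q \<omega> I y (hom0 q \<omega> + q^(2*n+1)*(x - hom0 q \<omega>)))
                  - L (hom0 q \<omega> + q^(2*n+1)*(x - hom0 q \<omega>)) (ys (hsig q \<omega> (hom0 q \<omega> + q^(2*n+1)*(x - hom0 q \<omega>)))) (hahnD q \<omega> I ys (hom0 q \<omega> + q^(2*n+1)*(x - hom0 q \<omega>)))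
                  - linp q \<omega> I L ys y (hom0 q \<omega> + q^(2*n+1)*(x - hom0 q \<omega>))))"
proof -
  define w where "w = hom0 q \<omega>"
  define d where "d = x - w"
  define K where "K = 1/q - q"
  define T where "T n = w + q^(2*n+1)*d" for n
  define s where "s n = w + q^(2*n)*d" for n
  define f where "f t = part3 L t (ys (hsig q \<omega> t)) (hahnD q \<omega> I ys t)" for t
  define Ly where "Ly t = L t (y (hsig q \<omega> t)) (hahnD q \<omega> I y t)" for t
  define Lys where "Lys t = L t (ys (hsig q \<omega> t)) (hahnD q \<omega> I ys t)" for t
  define lin where "lin = linp q \<omega> I L ys y"
  define Phi where "Phi t = Ly t - Lys t - lin t" for t
  have qn: "q \<noteq> 0" "q \<noteq> 1" using q by auto
  have i0: "\<And>F. hahn_int0 q \<omega> F x = K*d*(\<Sum>n. q^(2*n+1)*F(T n))"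
    unfolding int0_form[OF qn] K_def d_def T_def w_def by simp
  have goal_eq: "?thesis \<longleftrightarrow> hahn_int0 q \<omega> Ly x - hahn_int0 q \<omega> Lys x = hahn_int0 q \<omega> Phi x - f w * (y w - ys w)
         \<and> summable (\<lambda>n. q^(2*n+1) * Phi (T n))"
    unfolding Ly_def Lys_def Phi_def lin_def f_def w_def T_def d_def by (simp add: fun_eq_iff)
  show ?thesis
  proof (cases "d = 0")
    case True
    have "T = (\<lambda>n. w)" unfolding T_def True by simp
    moreover have "summable (\<lambda>n. q^(2*n+1) * Phi w)" using summ_bseq[OF q, of "\<lambda>n. Phi w"] by simp
    moreover have "y w = ys w" using x True d_def by simp
    ultimately show ?thesis unfolding goal_eq unfolding i0 True by simp
  next
    case dn: False
    have Kp: "0 < K" unfolding K_def using K_pos q by blast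
    have Kd: "K*d \<noteq> 0" using Kp dn by simp
    have Tn: "T n \<noteq> hom0 q \<omega>" for n unfolding T_def w_def using dn q by simp
    have hsT: "hsig q \<omega> (T n) = s (Suc n)" for n
      unfolding T_def s_def w_def hsig_shift[OF qn(2)] by simp
    have hiT: "hsig_inv q \<omega> (T n) = s n" for n
      unfolding T_def s_def w_def hsig_inv_shift[OF qn] using qn by simp
    have hss: "hsig q \<omega> (s n) = T n" for n
      unfolding T_def s_def w_def hsig_shift[OF qn(2)] by simp
    have Dform: "hahnD q \<omega> I g (T n) = (g (s (Suc n)) - g (s n)) / (s (Suc n) - s n)" for g n
      unfolding hahnD_def using Tn[of n] hsT hiT by simp
    have Wn: "s (Suc n) - s n \<noteq> 0" for n
    proof -
      have "s (Suc n) - s n = q^(2*n)*(q^2-1)*d" unfolding s_def by (simp add: algebra_simps power2_eq_square)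
      moreover have "q^2 < 1" using q by (simp add: power_less_one_iff)
      ultimately show ?thesis using dn qn by simp
    qed
    have KW: "K*d*q^(2*n+1) = -(s (Suc n) - s n)" for n
      unfolding K_def s_def using qn by (simp add: field_simps power2_eq_square)
    define P where "P n = f (T n) * (y (s n) - ys (s n))" for n
    have step: "(K*d)*(q^(2*n+1)*lin (T n)) = P n - P (Suc n)" for n
    proof -
      have p2: "part2 L (T n) (ys (hsig q \<omega> (T n))) (hahnD q \<omega> I ys (T n)) = (f (T (Suc n)) - f (T n)) / (s (Suc n) - s n)"
        using EL[rule_format, of n] unfolding T_def[symmetric] d_def[symmetric] w_def[symmetric]
        unfolding Dform hss f_def by simp
      have "lin (T n) = (f (T (Suc n)) - f (T n)) / (s (Suc n) - s n) * (y (s (Suc n)) - ys (s (Suc n)))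
         + f (T n) * ((y (s (Suc n)) - y (s n)) / (s (Suc n) - s n) - (ys (s (Suc n)) - ys (s n)) / (s (Suc n) - s n))"
        unfolding lin_def linp_def p2 by (simp add: hsT Dform f_def)
      then show ?thesis unfolding P_def using alg[OF Wn KW] by simp
    qed
    have TI: "T n \<in> I" for n
    proof -
      have "0 \<le> q^(2*n+1)" "q^(2*n+1) \<le> 1" using q by (auto simp del: power_Suc intro!: power_le_one)
      from in_I[OF I(1) I(2)[folded w_def] x(1) this] show ?thesis unfolding T_def d_def .
    qed
    have sI: "s n \<in> I" for n
    proof -
      have "0 \<le> q^(2*n)" "q^(2*n) \<le> 1" using q by (auto simp del: power_Suc intro!: power_le_one)
      from in_I[OF I(1) I(2)[folded w_def] x(1) this] show ?thesis unfolding s_def d_def .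
    qed
    have Tl: "T \<longlonglongrightarrow> w" unfolding T_def[abs_def] using tends1(1)[OF q] .
    have sl: "s \<longlonglongrightarrow> w" unfolding s_def[abs_def] using tends1(2)[OF q] .
    have lim: "(\<lambda>n. g (T n)) \<longlonglongrightarrow> g w" if "continuous (at w within I) g" for g
      using continuous_within_tendsto_compose[OF that _ Tl] TI by simp
    have lims: "(\<lambda>n. g (s n)) \<longlonglongrightarrow> g w" if "continuous (at w within I) g" for g
      using continuous_within_tendsto_compose[OF that _ sl] sI by simp
    have Pl: "P \<longlonglongrightarrow> f w * (y w - ys w)" unfolding P_def[abs_def]
      using cf cy cys unfolding f_def[symmetric] w_def[symmetric]
      by (intro tendsto_intros lim lims)
    have P0: "P 0 = 0" unfolding P_def s_def d_def using x(2) by simp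
    have "(\<lambda>n. P n - P (Suc n)) sums (P 0 - f w * (y w - ys w))" by (rule telescope_sums'[OF Pl])
    hence "(\<lambda>n. (K*d)*(q^(2*n+1)*lin (T n))) sums (- (f w * (y w - ys w)))" unfolding step P0 by simp
    hence "(\<lambda>n. (K*d)*(q^(2*n+1)*lin (T n)) / (K*d)) sums (- (f w * (y w - ys w)) / (K*d))" by (rule sums_divide)
    hence lsum: "(\<lambda>n. q^(2*n+1)*lin (T n)) sums (- (f w * (y w - ys w)) / (K*d))" using Kd by (simp add: mult.assoc)
    have sLy: "summable (\<lambda>n. q^(2*n+1)*Ly (T n))"
      using summ_bseq[OF q convergent_imp_Bseq[OF convergentI[OF lim[OF cLy[folded Ly_def w_def]]]]] .
    have sLys: "summable (\<lambda>n. q^(2*n+1)*Lys (T n))"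
      using summ_bseq[OF q convergent_imp_Bseq[OF convergentI[OF lim[OF cLys[folded Lys_def w_def]]]]] .
    have sl1: "summable (\<lambda>n. q^(2*n+1)*Ly (T n) - q^(2*n+1)*Lys (T n))" using sLy sLys by (rule summable_diff)
    have sl2: "summable (\<lambda>n. q^(2*n+1)*lin (T n))" using lsum by (rule sums_summable)
    have sPhi0: "summable (\<lambda>n. (q^(2*n+1)*Ly (T n) - q^(2*n+1)*Lys (T n)) - q^(2*n+1)*lin (T n))"
      using sl1 sl2 by (rule summable_diff)
    have fe: "(\<lambda>n. q^(2*n+1) * Phi (T n)) = (\<lambda>n. (q^(2*n+1)*Ly (T n) - q^(2*n+1)*Lys (T n)) - q^(2*n+1)*lin (T n))"
      unfolding Phi_def by (simp add: fun_eq_iff algebra_simps)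
    have sPhi: "summable (\<lambda>n. q^(2*n+1) * Phi (T n))" unfolding fe by (rule sPhi0)
    have "(\<Sum>n. q^(2*n+1) * Phi (T n)) = ((\<Sum>n. q^(2*n+1)*Ly (T n)) - (\<Sum>n. q^(2*n+1)*Lys (T n))) - (\<Sum>n. q^(2*n+1)*lin (T n))"
      unfolding fe suminf_diff[OF sLy sLys] suminf_diff[OF sl1 sl2] ..
    hence "K*d*(\<Sum>n. q^(2*n+1)*Ly (T n)) - K*d*(\<Sum>n. q^(2*n+1)*Lys (T n))
        = K*d*(\<Sum>n. q^(2*n+1) * Phi (T n)) + K*d*(\<Sum>n. q^(2*n+1)*lin (T n))" by (rule lin_alg)
    also have "K*d*(\<Sum>n. q^(2*n+1)*lin (T n)) = - (f w * (y w - ys w))"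
      by (rule div_alg[OF Kd]) (rule sums_unique[OF lsum, symmetric])
    finally show ?thesis unfolding goal_eq unfolding i0 using sPhi by simp
  qed
qed

lemma hahn_int_neg:
  assumes q: "0 < q" "q < 1"
    and sa: "summable (\<lambda>n. q^(2*n+1) * G (hom0 q \<omega> + q^(2*n+1)*(a - hom0 q \<omega>)))"
    and sb: "summable (\<lambda>n. q^(2*n+1) * G (hom0 q \<omega> + q^(2*n+1)*(b - hom0 q \<omega>)))"
  shows "hahn_int q \<omega> (\<lambda>t. - G t) a b = - hahn_int q \<omega> G a b"
proof -
  have qn: "q \<noteq> 0" "q \<noteq> 1" using q by auto
  have e: "\<And>x. (\<Sum>n. q^(2*n+1) * - G (hom0 q \<omega> + q^(2*n+1)*(x - hom0 q \<omega>)))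
      = (\<Sum>n. - (q^(2*n+1) * G (hom0 q \<omega> + q^(2*n+1)*(x - hom0 q \<omega>))))" by simp
  show ?thesis unfolding hahn_int_def int0_form[OF qn] e suminf_minus[OF sa] suminf_minus[OF sb]
    by (simp add: algebra_simps)
qed

theorem theorem3p11:
  fixes q \<omega> a b c \<alpha> \<beta> :: real and I :: "real set"
    and L :: "real \<Rightarrow> real \<Rightarrow> real \<Rightarrow> real" and ystar :: "real \<Rightarrow> real"
  assumes q: "0 < q" "q < 1" and om: "0 \<le> \<omega>"
    and I: "is_interval I" "hom0 q \<omega> \<in> I"
    and ab: "a \<in> I" "b \<in> I" "a < b" "c \<in> I" "a \<in> qset q \<omega> c" "b \<in> qset q \<omega> c"
    and H1: "\<forall>t\<in>I. C1_R2 (\<lambda>p. L t (fst p) (snd p))"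
    and H2: "\<forall>y. admissible q \<omega> I a b \<alpha> \<beta> y \<longrightarrow>
               continuous (at (hom0 q \<omega>) within I)
                 (\<lambda>t. L t (y (hsig q \<omega> t)) (hahnD q \<omega> I y t))"
    and H3: "\<forall>y. admissible q \<omega> I a b \<alpha> \<beta> y \<longrightarrow>
               Y1 q \<omega> I a b (\<lambda>t. part2 L t (y (hsig q \<omega> t)) (hahnD q \<omega> I y t)) \<and>
               Y1 q \<omega> I a b (\<lambda>t. part3 L t (y (hsig q \<omega> t)) (hahnD q \<omega> I y t))"
    and adm: "admissible q \<omega> I a b \<alpha> \<beta> ystar"
    and EL: "\<forall>t\<in>qint q \<omega> a b.
               part2 L t (ystar (hsig q \<omega> t)) (hahnD q \<omega> I ystar t) =
               hahnD q \<omega> I (\<lambda>\<tau>. part3 L (hsig q \<omega> \<tau>) (ystar (hsig q \<omega> (hsig q \<omega> \<tau>)))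
                                    (hahnD q \<omega> I ystar (hsig q \<omega> \<tau>))) t"
  shows "(jointly_convex I L \<longrightarrow>
            (\<forall>y. admissible q \<omega> I a b \<alpha> \<beta> y \<longrightarrow>
                 functionalL q \<omega> I L a b ystar \<le> functionalL q \<omega> I L a b y)) \<and>
         (jointly_concave I L \<longrightarrow>
            (\<forall>y. admissible q \<omega> I a b \<alpha> \<beta> y \<longrightarrow>
                 functionalL q \<omega> I L a b ystar \<ge> functionalL q \<omega> I L a b y))"
proof -
  have qn: "q \<noteq> 1" using q by simp
  have key: "functionalL q \<omega> I L a b y - functionalL q \<omega> I L a b ystar =
               hahn_int q \<omega> (\<lambda>t. L t (y (hsig q \<omega> t)) (hahnD q \<omega> I y t)
                  - L t (ystar (hsig q \<omega> t)) (hahnD q \<omega> I ystar t) - linp q \<omega> I L ystar y t) a b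
        \<and> (\<forall>x\<in>{a,b}. summable (\<lambda>n. q^(2*n+1) * (L (hom0 q \<omega> + q^(2*n+1)*(x - hom0 q \<omega>)) (y (hsig q \<omega> (hom0 q \<omega> + q^(2*n+1)*(x - hom0 q \<omega>)))) (hahnD q \<omega> I y (hom0 q \<omega> + q^(2*n+1)*(x - hom0 q \<omega>)))
                  - L (hom0 q \<omega> + q^(2*n+1)*(x - hom0 q \<omega>)) (ystar (hsig q \<omega> (hom0 q \<omega> + q^(2*n+1)*(x - hom0 q \<omega>)))) (hahnD q \<omega> I ystar (hom0 q \<omega> + q^(2*n+1)*(x - hom0 q \<omega>)))
                  - linp q \<omega> I L ystar y (hom0 q \<omega> + q^(2*n+1)*(x - hom0 q \<omega>)))))"
    if ya: "admissible q \<omega> I a b \<alpha> \<beta> y" for y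
  proof -
    have Yy: "Y1 q \<omega> I a b y" and Yys: "Y1 q \<omega> I a b ystar" using ya adm unfolding admissible_def by auto
    have cy: "continuous (at (hom0 q \<omega>) within I) y" using Yy unfolding Y1_def by blast
    have cys: "continuous (at (hom0 q \<omega>) within I) ystar" using Yys unfolding Y1_def by blast
    have cf: "continuous (at (hom0 q \<omega>) within I) (\<lambda>t. part3 L t (ystar (hsig q \<omega> t)) (hahnD q \<omega> I ystar t))"
      using H3 adm unfolding Y1_def by blast
    have cLy: "continuous (at (hom0 q \<omega>) within I) (\<lambda>t. L t (y (hsig q \<omega> t)) (hahnD q \<omega> I y t))" using H2 ya by blast
    have cLys: "continuous (at (hom0 q \<omega>) within I) (\<lambda>t. L t (ystar (hsig q \<omega> t)) (hahnD q \<omega> I ystar t))" using H2 adm by blast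
    have ELx: "\<forall>n. part2 L (hom0 q \<omega> + q^(2*n+1)*(x - hom0 q \<omega>))
                   (ystar (hsig q \<omega> (hom0 q \<omega> + q^(2*n+1)*(x - hom0 q \<omega>))))
                   (hahnD q \<omega> I ystar (hom0 q \<omega> + q^(2*n+1)*(x - hom0 q \<omega>))) =
             hahnD q \<omega> I (\<lambda>\<tau>. part3 L (hsig q \<omega> \<tau>) (ystar (hsig q \<omega> (hsig q \<omega> \<tau>)))
                                    (hahnD q \<omega> I ystar (hsig q \<omega> \<tau>))) (hom0 q \<omega> + q^(2*n+1)*(x - hom0 q \<omega>))"
      if "x \<in> {a,b}" for x
    proof
      fix n
      have "hom0 q \<omega> + q^(2*n+1)*(x - hom0 q \<omega>) \<in> qset q \<omega> x"
        unfolding qset_def hsig_pow[OF qn] by blast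
      hence "hom0 q \<omega> + q^(2*n+1)*(x - hom0 q \<omega>) \<in> qint q \<omega> a b" using that unfolding qint_def by blast
      then show "part2 L (hom0 q \<omega> + q^(2*n+1)*(x - hom0 q \<omega>))
                   (ystar (hsig q \<omega> (hom0 q \<omega> + q^(2*n+1)*(x - hom0 q \<omega>))))
                   (hahnD q \<omega> I ystar (hom0 q \<omega> + q^(2*n+1)*(x - hom0 q \<omega>))) =
             hahnD q \<omega> I (\<lambda>\<tau>. part3 L (hsig q \<omega> \<tau>) (ystar (hsig q \<omega> (hsig q \<omega> \<tau>)))
                                    (hahnD q \<omega> I ystar (hsig q \<omega> \<tau>))) (hom0 q \<omega> + q^(2*n+1)*(x - hom0 q \<omega>))"
        using EL by blast
    qed
    have yeq: "y a = ystar a" "y b = ystar b" using ya adm unfolding admissible_def by auto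
    note PA = per_x[OF q I ab(1) yeq(1) cy cys cLy cLys cf ELx[of a]]
    note PB = per_x[OF q I ab(2) yeq(2) cy cys cLy cLys cf ELx[of b]]
    show ?thesis
      apply (rule conjI)
      subgoal using conjunct1[OF PA] conjunct1[OF PB] unfolding functionalL_def hahn_int_def by simp
      subgoal using conjunct2[OF PA] conjunct2[OF PB] by blast
      done
  qed
  have TI: "hom0 q \<omega> + q^(2*n+1)*(x - hom0 q \<omega>) \<in> I" if "x \<in> I" for x n
  proof -
    have "0 \<le> q^(2*n+1)" "q^(2*n+1) \<le> 1" using q by (auto simp del: power_Suc intro!: power_le_one)
    from in_I[OF I(1) I(2) that this] show ?thesis .
  qed
  show ?thesis
  proof (intro conjI impI allI)
    fix y assume cv: "jointly_convex I L" and ya: "admissible q \<omega> I a b \<alpha> \<beta> y"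
    have nn: "0 \<le> L t (y (hsig q \<omega> t)) (hahnD q \<omega> I y t)
                  - L t (ystar (hsig q \<omega> t)) (hahnD q \<omega> I ystar t) - linp q \<omega> I L ystar y t" if "t \<in> I" for t
    proof -
      have h: "\<forall>u v u1 v1. L t (u + u1) (v + v1) - L t u v \<ge> part2 L t u v * u1 + part3 L t u v * v1"
        using cv that unfolding jointly_convex_def by blast
      from h[rule_format, of "ystar (hsig q \<omega> t)" "hahnD q \<omega> I ystar t"
                            "y (hsig q \<omega> t) - ystar (hsig q \<omega> t)" "hahnD q \<omega> I y t - hahnD q \<omega> I ystar t"]
      show ?thesis unfolding linp_def by simp
    qed
    have "0 \<le> hahn_int q \<omega> (\<lambda>t. L t (y (hsig q \<omega> t)) (hahnD q \<omega> I y t)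
                  - L t (ystar (hsig q \<omega> t)) (hahnD q \<omega> I ystar t) - linp q \<omega> I L ystar y t) a b"
      apply (rule pos_int[OF q ab(3) ab(5) ab(6)])
      subgoal using key[OF ya, THEN conjunct2] by blast
      subgoal using key[OF ya, THEN conjunct2] by blast
      subgoal by (intro allI nn TI ab(1))
      subgoal by (intro allI nn TI ab(2))
      done
    then show "functionalL q \<omega> I L a b ystar \<le> functionalL q \<omega> I L a b y" using key[OF ya] by simp
  next
    fix y assume cv: "jointly_concave I L" and ya: "admissible q \<omega> I a b \<alpha> \<beta> y"
    have nn: "0 \<le> - (L t (y (hsig q \<omega> t)) (hahnD q \<omega> I y t)
                  - L t (ystar (hsig q \<omega> t)) (hahnD q \<omega> I ystar t) - linp q \<omega> I L ystar y t)" if "t \<in> I" for t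
    proof -
      have h: "\<forall>u v u1 v1. L t (u + u1) (v + v1) - L t u v \<le> part2 L t u v * u1 + part3 L t u v * v1"
        using cv that unfolding jointly_concave_def by blast
      from h[rule_format, of "ystar (hsig q \<omega> t)" "y (hsig q \<omega> t) - ystar (hsig q \<omega> t)"
                            "hahnD q \<omega> I ystar t" "hahnD q \<omega> I y t - hahnD q \<omega> I ystar t"]
      show ?thesis unfolding linp_def by simp
    qed
    have s: "summable (\<lambda>n. q^(2*n+1) * - (L (hom0 q \<omega> + q^(2*n+1)*(x - hom0 q \<omega>)) (y (hsig q \<omega> (hom0 q \<omega> + q^(2*n+1)*(x - hom0 q \<omega>)))) (hahnD q \<omega> I y (hom0 q \<omega> + q^(2*n+1)*(x - hom0 q \<omega>)))
                  - L (hom0 q \<omega> + q^(2*n+1)*(x - hom0 q \<omega>)) (ystar (hsig q \<omega> (hom0 q \<omega> + q^(2*n+1)*(x - hom0 q \<omega>)))) (hahnD q \<omega> I ystar (hom0 q \<omega> + q^(2*n+1)*(x - hom0 q \<omega>)))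
                  - linp q \<omega> I L ystar y (hom0 q \<omega> + q^(2*n+1)*(x - hom0 q \<omega>))))" if "x \<in> {a,b}" for x
      using summable_minus[OF key[OF ya, THEN conjunct2, rule_format, OF that]] by (simp only: mult_minus_right)
    have "0 \<le> hahn_int q \<omega> (\<lambda>t. - (L t (y (hsig q \<omega> t)) (hahnD q \<omega> I y t)
                  - L t (ystar (hsig q \<omega> t)) (hahnD q \<omega> I ystar t) - linp q \<omega> I L ystar y t)) a b"
      apply (rule pos_int[OF q ab(3) ab(5) ab(6)])
      subgoal using s by blast
      subgoal using s by blast
      subgoal by (intro allI nn TI ab(1))
      subgoal by (intro allI nn TI ab(2))
      done
    also have "\<dots> = - hahn_int q \<omega> (\<lambda>t. L t (y (hsig q \<omega> t)) (hahnD q \<omega> I y t)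
                  - L t (ystar (hsig q \<omega> t)) (hahnD q \<omega> I ystar t) - linp q \<omega> I L ystar y t) a b"
      using key[OF ya] by (intro hahn_int_neg[OF q]) auto
    finally show "functionalL q \<omega> I L a b ystar \<ge> functionalL q \<omega> I L a b y" using key[OF ya] by simp
  qed
qed
end
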